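(* Let $n\ge 1$, let $A=\{\mathit{pts}_1,\ldots,\mathit{pts}_n\}\subseteq\mathit{PTS}$, and let $\mathit{pts}=\nabla((\mathit{pts}_1,\tfrac1n),\ldots,(\mathit{pts}_n,\tfrac1n))$. Then $\mathit{PTS}$, ordered by the subtyping relation $\le$ (with equality taken to be $\equiv$), is a complete lattice, and $\mathit{pts}$ is the least upper bound $\bigvee A$ of $A$.
   Context: $\mathit{Var}$ is a finite set of program variables. $\mathit{Addrs}=\{x' \mid x\in\mathit{Var}\}$ is a set of symbolic addresses (one per variable) and $\mathit{Addrs}_p=\mathit{Addrs}\times[0,1]$. $\textit{Pre-PTS}$ is the set of maps $\mathit{pts}:\mathit{Var}\to 2^{\mathit{Addrs}_p}$ such that for all $x,y\in\mathit{Var}$, if $(y',p_1),(y',p_2)\in\mathit{pts}(x)$ then $p_1=p_2$. For $\mathit{pts}\in\textit{Pre-PTS}$ and $x\in\mathit{Var}$, $\sum_{\mathit{pts}} x=\sum_{(z',p)\in\mathit{pts}(x)} p$ and $A_{\mathit{pts}}(x)=\{z'\mid \exists p>0.\ (z',p)\in\mathit{pts}(x)\}$. The set of points-to types is $\mathit{PTS}=\{\mathit{pts}\in\textit{Pre-PTS}\mid \forall x\in\mathit{Var}.\ \sum_{\mathit{pts}} x\le 1\}$. Subtyping: $\mathit{pts}\le\mathit{pts}'$ iff $A_{\mathit{pts}}(x)\subseteq A_{\mathit{pts}'}(x)$ for all $x$; equality: $\mathit{pts}\equiv\mathit{pts}'$ iff $A_{\mathit{pts}}(x)=A_{\mathit{pts}'}(x)$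 for all $x$. For $\mathit{pts}_1,\ldots,\mathit{pts}_n\in\mathit{PTS}$ and weights $q_1,\ldots,q_n\in[0,1]$ with sum $\le 1$, $\nabla((\mathit{pts}_1,q_1),\ldots,(\mathit{pts}_n,q_n))(x)=\{(z',p)\mid (\exists i.\ z'\in A_{\mathit{pts}_i}(x))\wedge p=\sum_{k:\ (z',p_k)\in\mathit{pts}_k(x)} q_k\, p_k\}$. *)

theory Defs
  imports Complex_Main
begin

(* Program variables are modelled by a finite type 'v. The symbolic address x'
  of a variable x is represented by x itself (one address per variable), so
  Addrs_p = 'v \<times> [0,1] is represented by pairs of type 'v \<times> real with the
  probability component constrained to [0,1]. *)

type_synonym 'v pts = "'v \<Rightarrow> ('v \<times> real) set"

definition pre_pts :: "'v pts \<Rightarrow> bool" where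
  "pre_pts f \<longleftrightarrow>
     (\<forall>x z p. (z, p) \<in> f x \<longrightarrow> 0 \<le> p \<and> p \<le> 1) \<and>
     (\<forall>x z p1 p2. (z, p1) \<in> f x \<and> (z, p2) \<in> f x \<longrightarrow> p1 = p2)"

definition psum :: "'v pts \<Rightarrow> 'v \<Rightarrow> real" where
  "psum f x = (\<Sum>(z, p)\<in>f x. p)"

definition PTS :: "('v::finite) pts set" where
  "PTS = {f. pre_pts f \<and> (\<forall>x. psum f x \<le> 1)}"

definition supp :: "'v pts \<Rightarrow> 'v \<Rightarrow> 'v set" where
  "supp f x = {z. \<exists>p>0. (z, p) \<in> f x}"

definition subtype :: "'v pts \<Rightarrow> 'v pts \<Rightarrow> bool" (infix "\<le>\<^sub>p" 50) where
  "f \<le>\<^sub>p g \<longleftrightarrow> (\<forall>x. supp f x \<subseteq> supp g x)"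

definition pts_equiv :: "'v pts \<Rightarrow> 'v pts \<Rightarrow> bool" (infix "\<equiv>\<^sub>p" 50) where
  "f \<equiv>\<^sub>p g \<longleftrightarrow> (\<forall>x. supp f x = supp g x)"

(* nabla n P q = \<nabla>((P 0, q 0), ..., (P (n-1), q (n-1))). *)
definition nabla :: "nat \<Rightarrow> (nat \<Rightarrow> 'v pts) \<Rightarrow> (nat \<Rightarrow> real) \<Rightarrow> 'v pts" where
  "nabla n P q x = {(z, p). (\<exists>i<n. z \<in> supp (P i) x) \<and>
      p = (\<Sum>k\<in>{k. k < n \<and> (\<exists>pk. (z, pk) \<in> P k x)}. q k * (THE pk. (z, pk) \<in> P k x))}"

definition is_lub :: "('v::finite) pts set \<Rightarrow> 'v pts \<Rightarrow> bool" where
  "is_lub S u \<longleftrightarrow> u \<in> PTS \<and> (\<forall>s\<in>S. s \<le>\<^sub>p u) \<and>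
     (\<forall>v\<in>PTS. (\<forall>s\<in>S. s \<le>\<^sub>p v) \<longrightarrow> u \<le>\<^sub>p v)"

definition is_glb :: "('v::finite) pts set \<Rightarrow> 'v pts \<Rightarrow> bool" where
  "is_glb S l \<longleftrightarrow> l \<in> PTS \<and> (\<forall>s\<in>S. l \<le>\<^sub>p s) \<and>
     (\<forall>v\<in>PTS. (\<forall>s\<in>S. v \<le>\<^sub>p s) \<longrightarrow> v \<le>\<^sub>p l)"

(* (PTS, <=p) modulo ==p is a complete lattice: <=p is a preorder whose
  kernel is ==p, and every subset of PTS has a lub and a glb in PTS. *)
definition PTS_complete_lattice :: "('v::finite) itself \<Rightarrow> bool" where
  "PTS_complete_lattice (TYPE('v)) \<longleftrightarrow>
     (\<forall>f\<in>(PTS :: 'v pts set). f \<le>\<^sub>p f) \<and>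
     (\<forall>f\<in>(PTS :: 'v pts set). \<forall>g\<in>PTS. \<forall>h\<in>PTS. f \<le>\<^sub>p g \<and> g \<le>\<^sub>p h \<longrightarrow> f \<le>\<^sub>p h) \<and>
     (\<forall>f\<in>(PTS :: 'v pts set). \<forall>g\<in>PTS. (f \<le>\<^sub>p g \<and> g \<le>\<^sub>p f) \<longleftrightarrow> f \<equiv>\<^sub>p g) \<and>
     (\<forall>S\<subseteq>(PTS :: 'v pts set). (\<exists>u. is_lub S u) \<and> (\<exists>l. is_glb S l))"

end

theory Submission
  imports Defs
begin

definition W :: "'v pts \<Rightarrow> 'v \<Rightarrow> 'v \<Rightarrow> real" where
  "W f x z = (if \<exists>p. (z, p) \<in> f x then THE p. (z, p) \<in> f x else 0)"

lemma W_eq: "pre_pts f \<Longrightarrow> (z, p) \<in> f x \<Longrightarrow> W f x z = p"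
  unfolding W_def pre_pts_def by (auto intro!: the_equality)

lemma W_mem: "(\<exists>p. (z, p) \<in> f x) \<Longrightarrow> pre_pts f \<Longrightarrow> (z, W f x z) \<in> f x"
  using W_eq by fastforce

lemma W_nonneg: "pre_pts f \<Longrightarrow> 0 \<le> W f x z"
proof (cases "\<exists>p. (z, p) \<in> f x")
  case True
  then obtain p where "(z,p) \<in> f x" by blast
  moreover assume "pre_pts f"
  ultimately show ?thesis using W_eq[of f z p x] unfolding pre_pts_def by auto
qed (simp add: W_def)

lemma W_le1: "pre_pts f \<Longrightarrow> W f x z \<le> 1"
proof (cases "\<exists>p. (z, p) \<in> f x")
  case True
  then obtain p where "(z,p) \<in> f x" by blast
  moreover assume "pre_pts f"
  ultimately show ?thesis using W_eq[of f z p x] unfolding pre_pts_def by auto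
qed (simp add: W_def)

lemma f_image: "pre_pts f \<Longrightarrow> f x = (\<lambda>z. (z, W f x z)) ` (fst ` f x)"
  using W_eq by (force simp: image_iff)

lemma psum_W:
  fixes f :: "('v::finite) pts"
  assumes "pre_pts f" shows "psum f x = (\<Sum>z\<in>UNIV. W f x z)"
proof -
  have "psum f x = (\<Sum>(z, p)\<in>(\<lambda>z. (z, W f x z)) ` (fst ` f x). p)"
    unfolding psum_def using f_image[OF assms] by metis
  also have "\<dots> = (\<Sum>z\<in>fst ` f x. W f x z)"
    by (subst sum.reindex) (auto simp: inj_on_def)
  also have "\<dots> = (\<Sum>z\<in>UNIV. W f x z)"
    by (rule sum.mono_neutral_left) (auto simp: W_def image_iff, metis fst_conv)
  finally show ?thesis .
qed

lemma supp_W: "pre_pts f \<Longrightarrow> supp f x = {z. W f x z > 0}"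
proof -
  assume a: "pre_pts f"
  have "(\<exists>p>0. (z, p) \<in> f x) \<longleftrightarrow> W f x z > 0" for z
  proof
    assume "\<exists>p>0. (z, p) \<in> f x"
    then obtain p where "p > 0" "(z,p) \<in> f x" by blast
    thus "W f x z > 0" using W_eq[OF a] by simp
  next
    assume h: "W f x z > 0"
    hence "\<exists>p. (z, p) \<in> f x" unfolding W_def by (cases "\<exists>p. (z, p) \<in> f x") auto
    thus "\<exists>p>0. (z, p) \<in> f x" using W_mem[OF _ a] h by blast
  qed
  thus ?thesis unfolding supp_def by blast
qed

definition mk :: "('v::finite) \<Rightarrow> 'v set \<Rightarrow> ('v \<times> real) set" where
  "mk x T = (\<lambda>z. (z, 1 / real (card (UNIV::'v set)))) ` T"

lemma mk_PTS: "(\<lambda>x. mk x (T x)) \<in> (PTS :: ('v::finite) pts set)"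
proof -
  have c: "real (card (UNIV::'v set)) \<ge> 1" by (simp add: card_gt_0_iff Suc_le_eq)
  have pre: "pre_pts (\<lambda>x. mk x (T x))"
    unfolding pre_pts_def mk_def using c by auto
  have "psum (\<lambda>x. mk x (T x)) x \<le> 1" for x
  proof -
    have "psum (\<lambda>x. mk x (T x)) x = (\<Sum>z\<in>T x. 1 / real (card (UNIV::'v set)))"
      unfolding psum_def mk_def by (subst sum.reindex) (auto simp: inj_on_def)
    also have "\<dots> = real (card (T x)) / real (card (UNIV::'v set))" by simp
    also have "\<dots> \<le> 1" using c card_mono[of UNIV "T x"] by (simp add: divide_le_eq)
    finally show ?thesis .
  qed
  thus ?thesis using pre unfolding PTS_def by auto
qed

lemma supp_mk: "supp (\<lambda>x. mk x (T x)) x = T (x :: 'v::finite)"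
proof -
  have c: "real (card (UNIV::'v set)) > 0" by (simp add: card_gt_0_iff Suc_le_eq)
  show ?thesis unfolding supp_def mk_def using c by (auto simp: image_iff)
qed

lemma complete: "PTS_complete_lattice TYPE('v::finite)"
proof -
  have "(\<exists>u. is_lub S u) \<and> (\<exists>l. is_glb S l)" if S: "S \<subseteq> PTS" for S :: "'v pts set"
  proof -
  let ?u = "\<lambda>x. mk x (\<Union>s\<in>S. supp s x)"
  have "is_lub S ?u" unfolding is_lub_def subtype_def
    using mk_PTS[of "\<lambda>x. \<Union>s\<in>S. supp s x"] supp_mk[of "\<lambda>x. \<Union>s\<in>S. supp s x"] by blast
  moreover
  let ?l = "\<lambda>x. mk x (\<Inter>s\<in>S. supp s x)"
  have "is_glb S ?l" unfolding is_glb_def subtype_def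
    using mk_PTS[of "\<lambda>x. \<Inter>s\<in>S. supp s x"] supp_mk[of "\<lambda>x. \<Inter>s\<in>S. supp s x"] by blast
  ultimately show ?thesis by blast
  qed
  thus ?thesis unfolding PTS_complete_lattice_def by (auto simp: subtype_def pts_equiv_def; blast)
qed

lemma nabla_image:
  assumes "\<forall>i<n. pre_pts (P i)"
  shows "nabla n P q x = (\<lambda>z. (z, \<Sum>k<n. q k * W (P k) x z)) ` {z. \<exists>i<n. z \<in> supp (P i) x}"
proof -
  have "(\<Sum>k\<in>{k. k < n \<and> (\<exists>pk. (z, pk) \<in> P k x)}. q k * (THE pk. (z, pk) \<in> P k x))
      = (\<Sum>k<n. q k * W (P k) x z)" for z
    by (rule sum.mono_neutral_cong_left) (auto simp: W_def)
  thus ?thesis unfolding nabla_def by (auto simp: image_iff)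
qed

theorem lemma2:
  fixes P :: "nat \<Rightarrow> ('v::finite) pts" and n :: nat
  assumes "n \<ge> 1"
    and "\<forall>i<n. P i \<in> PTS"
  shows "PTS_complete_lattice TYPE('v) \<and>
         is_lub (P ` {..<n}) (nabla n P (\<lambda>_. 1 / real n))"
proof -
  have pre: "\<forall>i<n. pre_pts (P i)" and ps: "\<And>i x. i < n \<Longrightarrow> psum (P i) x \<le> 1"
    using assms(2) unfolding PTS_def by auto
  define g where "g x z = (\<Sum>k<n. 1 / real n * W (P k) x z)" for x z
  define Z where "Z x = {z. \<exists>i<n. z \<in> supp (P i) x}" for x
  have N: "nabla n P (\<lambda>_. 1 / real n) x = (\<lambda>z. (z, g x z)) ` Z x" for x
    unfolding g_def Z_def by (rule nabla_image[OF pre])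
  have gnn: "0 \<le> g x z" for x z unfolding g_def using pre by (intro sum_nonneg mult_nonneg_nonneg) (auto intro: W_nonneg)
  have gle: "g x z \<le> 1" for x z
  proof -
    have "g x z \<le> (\<Sum>k<n. 1 / real n * 1)" unfolding g_def
      using pre by (intro sum_mono mult_left_mono) (auto intro: W_le1)
    also have "\<dots> = 1" using assms(1) by simp
    finally show ?thesis .
  qed
  have preN: "pre_pts (nabla n P (\<lambda>_. 1 / real n))"
    unfolding pre_pts_def N using gnn gle by auto
  have psN: "psum (nabla n P (\<lambda>_. 1 / real n)) x \<le> 1" for x
  proof -
    have "psum (nabla n P (\<lambda>_. 1 / real n)) x = (\<Sum>z\<in>Z x. g x z)"
      unfolding psum_def N by (subst sum.reindex) (auto simp: inj_on_def)
    also have "\<dots> \<le> (\<Sum>z\<in>UNIV. g x z)"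
      by (rule sum_mono2) (auto simp: gnn)
    also have "\<dots> = (\<Sum>k<n. 1 / real n * (\<Sum>z\<in>UNIV. W (P k) x z))"
      unfolding g_def by (simp add: sum.swap[of _ UNIV] sum_distrib_left)
    also have "\<dots> \<le> (\<Sum>k<n. 1 / real n * 1)"
      using ps pre by (intro sum_mono mult_left_mono) (auto simp: psum_W[symmetric])
    also have "\<dots> = 1" using assms(1) by simp
    finally show ?thesis .
  qed
  have inPTS: "nabla n P (\<lambda>_. 1 / real n) \<in> PTS"
    unfolding PTS_def using preN psN by auto
  have suppN: "supp (nabla n P (\<lambda>_. 1 / real n)) x = Z x" for x
  proof -
    have "g x z > 0" if zZ: "z \<in> Z x" for z
    proof -
      obtain i where i: "i < n" "W (P i) x z > 0"
        using zZ pre supp_W[of "P _" x] unfolding Z_def by blast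
      have "0 < 1 / real n * W (P i) x z" using i assms(1) by simp
      also have "\<dots> \<le> g x z" unfolding g_def
        using pre i by (intro member_le_sum mult_nonneg_nonneg) (auto intro: W_nonneg)
      finally show ?thesis .
    qed
    thus ?thesis unfolding supp_def N by auto
  qed
  have "is_lub (P ` {..<n}) (nabla n P (\<lambda>_. 1 / real n))"
    unfolding is_lub_def subtype_def suppN Z_def using inPTS by blast
  thus ?thesis using complete by blast
qed

end
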